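(* Let $n,t\in\mathbb{N}$, let $B\subset[n]$ be a random set (defined on the same probability space as the shuffle) and let $D\subset[n]$ be a deterministic set. Suppose that for some $c>0$, $$\min_{j\in D}\mathbb{P}^n_{id}(j\in B\mid j\in A^t)\ge c.$$ Then, writing $K=\mathbb{E}^n_{id}|D\cap A^t|$, for every $r\in(0,1)$, $$\mathbb{P}^n_{id}\Big(|B\cap D\cap A^t|\le r\cdot\mathbb{E}^n_{id}\{|B\cap D\cap A^t|\}\Big)\le\frac{K+(1-c^2)K^2}{(1-r)^2c^2K^2}.$$
   Context: The random-to-random insertions shuffle on a deck of $n$ cards numbered $1,\dots,n$: at each step a card is chosen uniformly at random, removed, and reinserted at a uniformly random position. $\mathbb{P}^n_{id}$ (with expectation $\mathbb{E}^n_{id}$) denotes the law of the shuffling process started from the identity ordering, and $A^t$ denotes the (random) set of cards that have not been chosen for removal in the first $t$ shuffles. $[n]=\{1,\dots,n\}$. *)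

theory Defs
  imports "HOL-Probability.Probability"
begin

text \<open>Canonical probability space of the random-to-random shuffle on n cards.
  Step s+1 (s = 0,1,...) is given by the pair  w !! s = (card chosen for removal,
  position of reinsertion), both uniform on {1..n}, all steps i.i.d.
  The deck is started from the identity ordering; the whole trajectory is a
  deterministic function of the stream w, so this space carries the process.\<close>
definition shuffle_space :: "nat \<Rightarrow> (nat \<times> nat) stream measure" where
  "shuffle_space n = stream_space (measure_pmf (pmf_of_set ({1..n} \<times> {1..n})))"

definition unchosen :: "nat \<Rightarrow> nat \<Rightarrow> (nat \<times> nat) stream \<Rightarrow> nat set" where
  "unchosen n t w = {1..n} - {fst (w !! s) | s. s < t}"

end

theory Submission
  imports Defs
begin

lemma (in prob_space) stream_emeasure_all:
  assumes P[measurable]: "{x\<in>space M. P x} \<in> sets M"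
  shows "emeasure (stream_space M) {w\<in>space (stream_space M). \<forall>s<t. P (w !! s)}
     = emeasure M {x\<in>space M. P x} ^ t"
proof (induction t)
  case 0
  interpret S: prob_space "stream_space M" by (rule prob_space_stream_space)
  show ?case by (simp add: S.emeasure_space_1)
next
  case (Suc t)
  have mP: "Measurable.pred M P" using P by (simp add: pred_def)
  have meas: "\<And>t. {w\<in>space (stream_space M). \<forall>s<t. P (w !! s)} \<in> sets (stream_space M)"
    using mP by measurable
  let ?E = "emeasure (stream_space M) {w\<in>space (stream_space M). \<forall>s<t. P (w !! s)}"
  have "emeasure (stream_space M) {w\<in>space (stream_space M). \<forall>s<Suc t. P (w !! s)}
     = (\<integral>\<^sup>+x. emeasure (stream_space M) {w\<in>space (stream_space M). x ## w \<in> {w\<in>space (stream_space M). \<forall>s<Suc t. P (w !! s)}} \<partial>M)"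
    by (rule emeasure_stream_space[OF meas])
  also have "\<dots> = (\<integral>\<^sup>+x. ?E * indicator {x\<in>space M. P x} x \<partial>M)"
  proof (rule nn_integral_cong)
    fix x assume x: "x \<in> space M"
    have "{w\<in>space (stream_space M). x ## w \<in> {w\<in>space (stream_space M). \<forall>s<Suc t. P (w !! s)}}
       = (if P x then {w\<in>space (stream_space M). \<forall>s<t. P (w !! s)} else {})"
      using x by (auto simp: space_stream_space All_less_Suc2)
    then show "emeasure (stream_space M) {w\<in>space (stream_space M). x ## w \<in> {w\<in>space (stream_space M). \<forall>s<Suc t. P (w !! s)}} = ?E * indicator {x\<in>space M. P x} x"
      using x by (simp split: split_indicator)
  qed
  also have "\<dots> = ?E * emeasure M {x\<in>space M. P x}"
    by (rule nn_integral_cmult_indicator[OF P])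
  finally show ?case using Suc by (simp add: mult.commute)
qed

lemma (in prob_space) stream_measure_all:
  assumes P[measurable]: "{x\<in>space M. P x} \<in> sets M"
  shows "measure (stream_space M) {w\<in>space (stream_space M). \<forall>s<t. P (w !! s)}
     = measure M {x\<in>space M. P x} ^ t"
proof -
  interpret S: prob_space "stream_space M" by (rule prob_space_stream_space)
  have "ennreal (measure (stream_space M) {w\<in>space (stream_space M). \<forall>s<t. P (w !! s)})
     = ennreal (measure M {x\<in>space M. P x} ^ t)"
    using stream_emeasure_all[OF P, of t]
    by (simp add: S.emeasure_eq_measure emeasure_eq_measure ennreal_power)
  then show ?thesis by (simp add: ennreal_inj)
qed

lemma (in prob_space) sum_ind_facts:
  fixes E :: "'b \<Rightarrow> 'a set"
  assumes D: "finite D" and E: "\<And>j. E j \<in> sets M"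
  shows "(\<lambda>w. \<Sum>j\<in>D. indicator (E j) w :: real) \<in> borel_measurable M"
    and "integrable M (\<lambda>w. \<Sum>j\<in>D. indicator (E j) w :: real)"
    and "expectation (\<lambda>w. \<Sum>j\<in>D. indicator (E j) w :: real) = (\<Sum>j\<in>D. prob (E j))"
    and "integrable M (\<lambda>w. (\<Sum>j\<in>D. indicator (E j) w :: real)^2)"
    and "expectation (\<lambda>w. (\<Sum>j\<in>D. indicator (E j) w :: real)^2) = (\<Sum>j\<in>D. \<Sum>k\<in>D. prob (E j \<inter> E k))"
proof -
  have sq: "(\<lambda>w. (\<Sum>j\<in>D. indicator (E j) w :: real)^2) = (\<lambda>w. \<Sum>j\<in>D. \<Sum>k\<in>D. indicator (E j \<inter> E k) w)"
    by (simp add: power2_eq_square sum_product indicator_inter_arith)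
  show "(\<lambda>w. \<Sum>j\<in>D. indicator (E j) w :: real) \<in> borel_measurable M"
    using E by measurable
  show "integrable M (\<lambda>w. \<Sum>j\<in>D. indicator (E j) w :: real)"
    using E by (auto intro!: Bochner_Integration.integrable_sum integrable_real_indicator simp: less_top[symmetric])
  show "expectation (\<lambda>w. \<Sum>j\<in>D. indicator (E j) w :: real) = (\<Sum>j\<in>D. prob (E j))"
    using E by (subst Bochner_Integration.integral_sum) (auto intro!: integrable_real_indicator simp: less_top[symmetric])
  show "integrable M (\<lambda>w. (\<Sum>j\<in>D. indicator (E j) w :: real)^2)"
    unfolding sq using E by (auto intro!: Bochner_Integration.integrable_sum integrable_real_indicator simp: less_top[symmetric])
  show "expectation (\<lambda>w. (\<Sum>j\<in>D. indicator (E j) w :: real)^2) = (\<Sum>j\<in>D. \<Sum>k\<in>D. prob (E j \<inter> E k))"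
    unfolding sq using E by (subst Bochner_Integration.integral_sum, auto intro!: Bochner_Integration.integrable_sum integrable_real_indicator simp: less_top[symmetric])+
qed

lemma final_arith:
  fixes K c r EY EY2 :: real
  assumes K: "K > 0" and c: "c > 0" and r: "0 < r" "r < 1" and EY: "EY \<ge> c * K" and E2: "EY2 \<le> K + K^2"
  shows "(EY2 - EY^2) / ((1 - r) * EY)^2 \<le> (K + (1 - c^2) * K^2) / ((1 - r)^2 * c^2 * K^2)"
proof -
  have cK: "c * K > 0" using K c by simp
  have EYp: "EY > 0" using cK EY by linarith
  have sq: "(c*K)^2 \<le> EY^2" using cK EY by (intro power_mono) auto
  have "EY2 / EY^2 \<le> (K + K^2) / (c*K)^2"
    by (rule frac_le) (use K E2 cK sq in auto)
  hence "EY2 / EY^2 - 1 \<le> (K + K^2) / (c*K)^2 - 1" by linarith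
  hence "(EY2 / EY^2 - 1) / (1-r)^2 \<le> ((K + K^2) / (c*K)^2 - 1) / (1-r)^2"
    using r by (intro divide_right_mono) auto
  moreover have "(EY2 - EY^2) / ((1 - r) * EY)^2 = (EY2 / EY^2 - 1) / (1-r)^2"
    using EYp r by (simp add: divide_simps power_mult_distrib)
  moreover have "((K + K^2) / (c*K)^2 - 1) / (1-r)^2 = (K + (1 - c^2) * K^2) / ((1 - r)^2 * c^2 * K^2)"
    using K c r by (simp add: field_simps power_mult_distrib)
  ultimately show ?thesis by simp
qed

lemma unchosen_eq:
  "{w. j \<in> unchosen n t w} = (if j \<in> {1..n} then {w. \<forall>s<t. fst (w !! s) \<noteq> j} else {})"
  by (auto simp: unchosen_def)

lemma unchosen_eq2:
  "{w. j \<in> unchosen n t w} \<inter> {w. k \<in> unchosen n t w} = (if j \<in> {1..n} \<and> k \<in> {1..n} then {w. \<forall>s<t. fst (w !! s) \<noteq> j \<and> fst (w !! s) \<noteq> k} else {})"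
  by (auto simp: unchosen_def)

theorem lemma2:
  fixes n t :: nat and B :: "(nat \<times> nat) stream \<Rightarrow> nat set" and D :: "nat set"
    and c r :: real
  assumes B_sub: "\<And>w. w \<in> space (shuffle_space n) \<Longrightarrow> B w \<subseteq> {1..n}"
    and B_meas: "\<And>j. {w \<in> space (shuffle_space n). j \<in> B w} \<in> sets (shuffle_space n)"
    and D_sub: "D \<subseteq> {1..n}" and D_ne: "D \<noteq> {}"
    and c_pos: "c > 0"
    and hyp: "Min ((\<lambda>j. cond_prob (shuffle_space n) (\<lambda>w. j \<in> B w) (\<lambda>w. j \<in> unchosen n t w)) ` D) \<ge> c"
    and r: "0 < r" "r < 1"
  shows "(let K = (\<integral>w. real (card (D \<inter> unchosen n t w)) \<partial>shuffle_space n);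
              EY = (\<integral>w. real (card (B w \<inter> D \<inter> unchosen n t w)) \<partial>shuffle_space n)
          in measure (shuffle_space n)
               {w \<in> space (shuffle_space n). real (card (B w \<inter> D \<inter> unchosen n t w)) \<le> r * EY}
             \<le> (K + (1 - c\<^sup>2) * K\<^sup>2) / ((1 - r)\<^sup>2 * c\<^sup>2 * K\<^sup>2))"
proof -
  define M0 where "M0 = measure_pmf (pmf_of_set ({1..n} \<times> {1..n}))"
  define S where "S = shuffle_space n"
  interpret M0: prob_space M0 unfolding M0_def by (rule prob_space_measure_pmf)
  have S_eq: "S = stream_space M0" unfolding S_def M0_def shuffle_space_def ..
  interpret S: prob_space S unfolding S_eq by (rule M0.prob_space_stream_space)
  have spM0: "space M0 = UNIV" and setsM0: "sets M0 = UNIV" unfolding M0_def by auto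
  have spS: "space S = UNIV" unfolding S_eq by (simp add: space_stream_space spM0)
  have finD: "finite D" using D_sub finite_subset by blast
  define AJ where "AJ j = {w. j \<in> unchosen n t w}" for j
  define BJ where "BJ j = {w. j \<in> B w}" for j
  have all_meas: "{w. \<forall>s<t. Q (w !! s)} \<in> sets S" for Q :: "nat \<times> nat \<Rightarrow> bool"
  proof -
    have [measurable]: "Measurable.pred M0 Q" by (simp add: pred_def setsM0)
    have "{w\<in>space (stream_space M0). \<forall>s<t. Q (w !! s)} \<in> sets (stream_space M0)" by measurable
    moreover have "space (stream_space M0) = UNIV" using spS by (simp add: S_eq)
    ultimately show ?thesis by (simp add: S_eq)
  qed
  have all_prob: "S.prob {w. \<forall>s<t. Q (w !! s)} = M0.prob {x. Q x} ^ t" for Q :: "nat \<times> nat \<Rightarrow> bool"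
    using M0.stream_measure_all[of Q t] spS by (simp add: S_eq spM0 setsM0)
  have AJ_meas: "AJ j \<in> sets S" for j
    unfolding AJ_def unchosen_eq using all_meas by auto
  have BJ_meas: "BJ j \<in> sets S" for j
    using B_meas[of j] spS unfolding BJ_def S_def by simp
  have pair: "S.prob (AJ j \<inter> AJ k) \<le> S.prob (AJ j) * S.prob (AJ k)" if jk: "j \<in> D" "k \<in> D" "j \<noteq> k" for j k
  proof -
    have j1: "j \<in> {1..n}" "k \<in> {1..n}" using jk D_sub by auto
    define a where "a = M0.prob {x. fst x = j}"
    define b where "b = M0.prob {x. fst x = k}"
    have pa: "M0.prob {x. fst x \<noteq> j} = 1 - a"
      using M0.prob_compl[of "{x. fst x = j}"] by (simp add: a_def spM0 setsM0 Compl_eq_Diff_UNIV[symmetric] Collect_neg_eq)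
    have pb: "M0.prob {x. fst x \<noteq> k} = 1 - b"
      using M0.prob_compl[of "{x. fst x = k}"] by (simp add: b_def spM0 setsM0 Compl_eq_Diff_UNIV[symmetric] Collect_neg_eq)
    have un: "M0.prob ({x. fst x = j} \<union> {x. fst x = k}) = a + b"
      unfolding a_def b_def using jk by (subst M0.finite_measure_Union) (auto simp: setsM0)
    have pab: "M0.prob {x. fst x \<noteq> j \<and> fst x \<noteq> k} = 1 - (a + b)"
    proof -
      have "{x::nat\<times>nat. fst x \<noteq> j \<and> fst x \<noteq> k} = UNIV - ({x. fst x = j} \<union> {x. fst x = k})" by auto
      moreover have "M0.prob (UNIV - ({x. fst x = j} \<union> {x. fst x = k})) = 1 - (a + b)"
        using M0.prob_compl[of "{x. fst x = j} \<union> {x. fst x = k}"] un by (simp add: spM0 setsM0)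
      ultimately show ?thesis by simp
    qed
    have a0: "a \<ge> 0" "b \<ge> 0" unfolding a_def b_def by auto
    have nn: "0 \<le> 1 - (a + b)" using un M0.prob_le_1 by (metis diff_ge_0_iff_ge)
    have le: "1 - (a + b) \<le> (1 - a) * (1 - b)" using a0 by (simp add: algebra_simps)
    have "S.prob (AJ j \<inter> AJ k) = (1 - (a + b)) ^ t"
      unfolding AJ_def unchosen_eq2 using j1 all_prob[of "\<lambda>x. fst x \<noteq> j \<and> fst x \<noteq> k"] pab by simp
    also have "\<dots> \<le> ((1 - a) * (1 - b)) ^ t" using nn le by (intro power_mono)
    also have "\<dots> = S.prob (AJ j) * S.prob (AJ k)"
      unfolding AJ_def unchosen_eq using j1 all_prob[of "\<lambda>x. fst x \<noteq> j"] all_prob[of "\<lambda>x. fst x \<noteq> k"] pa pb by (simp add: power_mult_distrib)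
    finally show ?thesis .
  qed

  define X where "X w = (\<Sum>j\<in>D. indicator (AJ j) w :: real)" for w
  define Y where "Y w = (\<Sum>j\<in>D. indicator (BJ j \<inter> AJ j) w :: real)" for w
  have Xeq: "real (card (D \<inter> unchosen n t w)) = X w" for w
  proof -
    have "real (card (D \<inter> unchosen n t w)) = (\<Sum>j\<in>D. indicator (unchosen n t w) j)"
      using sum_indicator_eq_card[OF finD, of "unchosen n t w"] of_nat_sum[of "indicator (unchosen n t w)" D]
      by (simp add: indicator_def)
    also have "\<dots> = X w" unfolding X_def AJ_def by (intro sum.cong) (auto simp: indicator_def)
    finally show ?thesis .
  qed
  have Yeq: "real (card (B w \<inter> D \<inter> unchosen n t w)) = Y w" for w
  proof -
    have "real (card (B w \<inter> D \<inter> unchosen n t w)) = real (card (D \<inter> (B w \<inter> unchosen n t w)))"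
      by (simp add: Int_ac)
    also have "\<dots> = (\<Sum>j\<in>D. indicator (B w \<inter> unchosen n t w) j)"
      using sum_indicator_eq_card[OF finD, of "B w \<inter> unchosen n t w"] of_nat_sum[of "indicator (B w \<inter> unchosen n t w)" D]
      by (simp add: indicator_def)
    also have "\<dots> = Y w" unfolding Y_def AJ_def BJ_def by (intro sum.cong) (auto simp: indicator_def)
    finally show ?thesis .
  qed
  have BAmeas: "BJ j \<inter> AJ j \<in> sets S" for j using BJ_meas AJ_meas by auto
  note FX = S.sum_ind_facts[OF finD AJ_meas]
  note FY = S.sum_ind_facts[OF finD BAmeas]
  define K where "K = (\<Sum>j\<in>D. S.prob (AJ j))"
  define EY where "EY = (\<Sum>j\<in>D. S.prob (BJ j \<inter> AJ j))"
  define EY2 where "EY2 = (\<Sum>j\<in>D. \<Sum>k\<in>D. S.prob ((BJ j \<inter> AJ j) \<inter> (BJ k \<inter> AJ k)))"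
  define EX2 where "EX2 = (\<Sum>j\<in>D. \<Sum>k\<in>D. S.prob (AJ j \<inter> AJ k))"
  have intK: "(\<integral>w. real (card (D \<inter> unchosen n t w)) \<partial>shuffle_space n) = K"
    unfolding Xeq S_def[symmetric] K_def using FX(3) by (simp add: X_def)
  have intY: "(\<integral>w. real (card (B w \<inter> D \<inter> unchosen n t w)) \<partial>shuffle_space n) = EY"
    unfolding Yeq S_def[symmetric] EY_def using FY(3) by (simp add: Y_def)
  have EY2_le: "EY2 \<le> EX2" unfolding EY2_def EX2_def
    by (intro sum_mono S.finite_measure_mono) (auto intro: AJ_meas)
  have EX2_le: "EX2 \<le> K + K^2"
  proof -
    have "EX2 \<le> (\<Sum>j\<in>D. \<Sum>k\<in>D. (if j = k then S.prob (AJ j) else 0) + S.prob (AJ j) * S.prob (AJ k))"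
      unfolding EX2_def
    proof (intro sum_mono)
      fix j k assume jk: "j \<in> D" "k \<in> D"
      show "S.prob (AJ j \<inter> AJ k) \<le> (if j = k then S.prob (AJ j) else 0) + S.prob (AJ j) * S.prob (AJ k)"
      proof (cases "j = k")
        case True then show ?thesis by simp
      next
        case False then show ?thesis using pair[OF jk False] by simp
      qed
    qed
    also have "\<dots> = K + K^2"
      unfolding K_def by (simp add: sum.distrib finD power2_eq_square sum_product)
    finally show ?thesis .
  qed
  have fj: "cond_prob S (\<lambda>w. j \<in> B w) (\<lambda>w. j \<in> unchosen n t w) = S.prob (BJ j \<inter> AJ j) / S.prob (AJ j)" for j
    unfolding cond_prob_def spS BJ_def AJ_def by (simp add: Collect_conj_eq)
  have cj: "c \<le> S.prob (BJ j \<inter> AJ j) / S.prob (AJ j)" if "j \<in> D" for j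
    using hyp Min_le[of "(\<lambda>j. cond_prob (shuffle_space n) (\<lambda>w. j \<in> B w) (\<lambda>w. j \<in> unchosen n t w)) ` D"] that finD
    unfolding S_def[symmetric] fj by (meson finite_imageI image_eqI order_trans)
  have qj: "c * S.prob (AJ j) \<le> S.prob (BJ j \<inter> AJ j)" if "j \<in> D" for j
  proof (cases "S.prob (AJ j) = 0")
    case True then show ?thesis by simp
  next
    case False
    then have "S.prob (AJ j) > 0" using measure_nonneg[of S "AJ j"] by linarith
    then show ?thesis using cj[OF that] by (simp add: pos_le_divide_eq)
  qed
  obtain j0 where j0: "j0 \<in> D" using D_ne by blast
  have pj0: "S.prob (AJ j0) > 0"
  proof (rule ccontr)
    assume "\<not> S.prob (AJ j0) > 0"
    then have "S.prob (AJ j0) = 0" using measure_nonneg[of S "AJ j0"] by linarith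
    then show False using cj[OF j0] c_pos by simp
  qed
  have Kpos: "K > 0"
  proof -
    have "S.prob (AJ j0) \<le> K" unfolding K_def using j0 finD by (intro member_le_sum) auto
    then show ?thesis using pj0 by linarith
  qed
  have EY_ge: "EY \<ge> c * K" unfolding EY_def K_def sum_distrib_left using qj by (intro sum_mono) auto
  have EYpos: "EY > 0" using EY_ge Kpos c_pos by (smt (verit) mult_pos_pos)
  have expY: "S.expectation Y = EY" using FY(3) unfolding Y_def EY_def by simp
  have expY2: "S.expectation (\<lambda>w. (Y w)^2) = EY2" using FY(5) unfolding Y_def EY2_def by simp
  have Ymeas[measurable]: "Y \<in> borel_measurable S" using FY(1) unfolding Y_def by simp
  have Yint: "integrable S Y" using FY(2) unfolding Y_def by simp
  have Y2int: "integrable S (\<lambda>w. (Y w)^2)" using FY(4) unfolding Y_def by simp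
  have var: "S.variance Y = EY2 - EY^2" using S.variance_eq[OF Yint Y2int] expY expY2 by simp
  have cheb: "S.prob {w\<in>space S. \<bar>Y w - EY\<bar> \<ge> (1 - r) * EY} \<le> (EY2 - EY^2) / ((1 - r) * EY)^2"
    using S.Chebyshev_inequality[OF Ymeas Y2int, of "(1 - r) * EY"] EYpos r expY var by simp
  have sub: "{w\<in>space S. Y w \<le> r * EY} \<subseteq> {w\<in>space S. \<bar>Y w - EY\<bar> \<ge> (1 - r) * EY}"
    by (auto simp: algebra_simps)
  have "S.prob {w\<in>space S. Y w \<le> r * EY} \<le> S.prob {w\<in>space S. \<bar>Y w - EY\<bar> \<ge> (1 - r) * EY}"
    by (rule S.finite_measure_mono[OF sub]) measurable
  also note cheb
  also have "(EY2 - EY^2) / ((1 - r) * EY)^2 \<le> (K + (1 - c^2) * K^2) / ((1 - r)^2 * c^2 * K^2)"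
    using final_arith[OF Kpos c_pos r EY_ge] EY2_le EX2_le by simp
  finally have fin: "S.prob {w\<in>space S. Y w \<le> r * EY} \<le> (K + (1 - c^2) * K^2) / ((1 - r)^2 * c^2 * K^2)" .
  show ?thesis using fin unfolding Let_def intK intY unfolding Yeq S_def[symmetric] by simp
qed

end
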